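(* For $s>0$ and $\kappa\ge1$, if $\theta_0\in[\phi(R)+\kappa\phi^{(s)},\frac\pi2)$, then $e^{\tilde{\mathfrak r}_0-\mathfrak r_0}=O\big(\varepsilon(\kappa,s)^{-1/\alpha}\big)$, with implicit constant depending only on $\alpha$.
   Context: Fixed constants $\nu>0$, $\alpha\in(\tfrac12,1]$; $R:=2\log(n/\nu)$, $n$ large. $\phi(r)\in[0,\pi/2]$ is defined for $r\in[0,R]$ by $\cos\phi(r)=\coth R\tanh(r/2)$ (decreasing bijection onto $[\phi(R),\pi/2]$). $\phi^{(s)}:=(s^{1/\alpha}/e^R)^{1/2}$, $\varepsilon(\kappa,s):=\frac{1+s}{(1+\kappa s^{1/(2\alpha)})^{2\alpha}}$. $\mathfrak r_0:=\phi^{-1}(\theta_0)$ and $\tilde{\mathfrak r}_0\in[\mathfrak r_0,R]$ is the unique value with $\frac{\log(\tanh(\alpha R/2)/\tanh(\alpha\tilde{\mathfrak r}_0/2))}{\log(\tanh(\alpha R/2)/\tanh(\alpha\mathfrak r_0/2))}=\varepsilon(\kappa,s)$. *)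

theory Defs
  imports Complex_Main
begin

definition radius :: "real \<Rightarrow> nat \<Rightarrow> real" where
  "radius \<nu> n = 2 * ln (real n / \<nu>)"

definition phi :: "real \<Rightarrow> real \<Rightarrow> real" where
  "phi R r = arccos ((cosh R / sinh R) * tanh (r / 2))"

definition phi_s :: "real \<Rightarrow> real \<Rightarrow> real \<Rightarrow> real" where
  "phi_s \<alpha> R s = sqrt (s powr (1 / \<alpha>) / exp R)"

definition eps :: "real \<Rightarrow> real \<Rightarrow> real \<Rightarrow> real" where
  "eps \<alpha> \<kappa> s = (1 + s) / (1 + \<kappa> * s powr (1 / (2 * \<alpha>))) powr (2 * \<alpha>)"

definition logratio :: "real \<Rightarrow> real \<Rightarrow> real \<Rightarrow> real" where
  "logratio \<alpha> R r = ln (tanh (\<alpha> * R / 2) / tanh (\<alpha> * r / 2))"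

end

theory Submission imports Defs begin

lemma keyineq:
  fixes x :: real assumes "0 \<le> x" "x < 1"
  shows "ln (1+x) - ln (1-x) \<le> x * (1/(1+x) + 1/(1-x))"
proof -
  let ?f = "\<lambda>t::real. t * (1/(1+t) + 1/(1-t)) - (ln (1+t) - ln (1-t))"
  have "?f 0 \<le> ?f x"
  proof (rule DERIV_nonneg_imp_nondecreasing[OF assms(1)])
    fix t :: real assume t: "0 \<le> t" "t \<le> x"
    hence t1: "t < 1" using assms by simp
    have d: "(?f has_real_derivative
       (1/(1+t) + 1/(1-t)) + t * (- 1/(1+t)^2 + 1/(1-t)^2) - (1/(1+t) + 1/(1-t))) (at t)"
      using t t1
      apply (intro derivative_eq_intros refl)
      apply (auto simp: power2_eq_square)
      done
    have "t * (- 1/(1+t)^2 + 1/(1-t)^2) \<ge> 0"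
    proof -
      have "(1-t)^2 \<le> (1+t)^2" using t by (simp add: power2_eq_square algebra_simps)
      hence "1/(1+t)^2 \<le> 1/(1-t)^2" using t1 t by (intro divide_left_mono) auto
      thus ?thesis using t by simp
    qed
    thus "\<exists>y. DERIV ?f t :> y \<and> 0 \<le> y" using d by (intro exI[of _ _]) (rule conjI, assumption, simp)
  qed
  thus ?thesis by simp
qed

lemma Gmono:
  fixes y a b :: real assumes "0 \<le> y" "y \<le> a" "a \<le> b" "b < 1" "0 < a"
  shows "((ln (1+a) - ln (1-a)) - (ln (1+y) - ln (1-y)))/a \<le> ((ln (1+b) - ln (1-b)) - (ln (1+y) - ln (1-y)))/b"
proof -
  define c where "c = ln (1+y) - ln (1-y)"
  have c0: "c \<ge> 0" unfolding c_def using assms by simp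
  let ?G = "\<lambda>t::real. ((ln (1+t) - ln (1-t)) - c) / t"
  have "?G a \<le> ?G b"
  proof (rule DERIV_nonneg_imp_nondecreasing[OF assms(3)])
    fix t :: real assume t: "a \<le> t" "t \<le> b"
    hence t1: "t < 1" "0 < t" using assms by auto
    have d0: "((\<lambda>t. (ln (1+t) - ln (1-t)) - c) has_real_derivative (1/(1+t) + 1/(1-t))) (at t)"
      using t1
      apply (intro derivative_eq_intros refl)
      apply (auto simp: power2_eq_square)
      done
    have d1: "((\<lambda>t. ((ln (1+t) - ln (1-t)) - c) / t) has_real_derivative
       ((1/(1+t) + 1/(1-t)) * t - ((ln (1+t) - ln (1-t)) - c) * 1) / (t*t)) (at t)"
      using DERIV_divide[OF d0 DERIV_ident] t1 by simp
    have d: "(?G has_real_derivative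
       ((1/(1+t) + 1/(1-t)) * t - ((ln (1+t) - ln (1-t)) - c)) / t^2) (at t)"
      using d1 by (simp add: power2_eq_square)
    have "(1/(1+t) + 1/(1-t)) * t - ((ln (1+t) - ln (1-t)) - c) \<ge> 0"
      using keyineq[of t] t1 c0 by (simp add: algebra_simps)
    hence "((1/(1+t) + 1/(1-t)) * t - ((ln (1+t) - ln (1-t)) - c)) / t^2 \<ge> 0" by simp
    thus "\<exists>y. DERIV ?G t :> y \<and> 0 \<le> y" using d by blast
  qed
  thus ?thesis unfolding c_def .
qed

lemma lntanh:
  fixes z :: real assumes "z > 0"
  shows "ln (tanh (z/2)) = ln (1 - exp (-z)) - ln (1 + exp (-z))"
proof -
  have "tanh (z/2) = (1 - exp (-z)) / (1 + exp (-z))" by (simp add: tanh_real_altdef)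
  moreover have "exp (-z) < 1" using assms by simp
  moreover have "1 + exp (-z) > 0" using exp_gt_zero[of "-z"] by linarith
  ultimately show ?thesis by (simp add: ln_div)
qed

lemma logratio_eq:
  fixes \<alpha> R r :: real assumes "\<alpha> > 0" "r > 0" "r \<le> R"
  shows "logratio \<alpha> R r = (ln (1+exp(-(\<alpha>*r))) - ln (1-exp(-(\<alpha>*r)))) - (ln (1+exp(-(\<alpha>*R))) - ln (1-exp(-(\<alpha>*R))))" (is "_ = ?rhs")
proof -
  have p: "\<alpha>*r > 0" "\<alpha>*R > 0" using assms by (auto intro: mult_pos_pos)
  have "\<alpha>*r/2 > 0" "\<alpha>*R/2 > 0" using p by auto
  hence "tanh (\<alpha>*r/2) > 0" "tanh (\<alpha>*R/2) > 0" using tanh_real_pos_iff by blast+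
  hence "logratio \<alpha> R r = ln (tanh (\<alpha>*R/2)) - ln (tanh (\<alpha>*r/2))"
    unfolding logratio_def by (simp only: ln_div) (use assms in auto)
  also have "\<dots> = ?rhs" using lntanh[of "\<alpha>*r"] lntanh[of "\<alpha>*R"] p by simp
  finally show ?thesis .
qed

lemma logratio_nonneg:
  fixes \<alpha> R r :: real assumes "\<alpha> > 0" "r > 0" "r \<le> R"
  shows "logratio \<alpha> R r \<ge> 0"
proof -
  have p: "\<alpha>*r > 0" "\<alpha>*r \<le> \<alpha>*R" using assms by (auto intro: mult_pos_pos)
  have "tanh (\<alpha>*r/2) > 0" using p by auto
  moreover have "tanh (\<alpha>*r/2) \<le> tanh (\<alpha>*R/2)" using p by simp
  ultimately show ?thesis unfolding logratio_def by simp
qed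

theorem mainTheorem9:
  fixes \<alpha> :: real
  assumes "1 / 2 < \<alpha>" and "\<alpha> \<le> 1"
  shows "\<exists>C>0. \<forall>\<nu>>0. \<exists>N::nat. \<forall>n\<ge>N. \<forall>s \<kappa> \<theta>\<^sub>0 r\<^sub>0 rt.
    s > 0 \<longrightarrow> \<kappa> \<ge> 1 \<longrightarrow>
    \<theta>\<^sub>0 \<in> {phi (radius \<nu> n) (radius \<nu> n) + \<kappa> * phi_s \<alpha> (radius \<nu> n) s ..< pi / 2} \<longrightarrow>
    r\<^sub>0 \<in> {0 .. radius \<nu> n} \<longrightarrow> phi (radius \<nu> n) r\<^sub>0 = \<theta>\<^sub>0 \<longrightarrow>
    rt \<in> {r\<^sub>0 .. radius \<nu> n} \<longrightarrow>
    logratio \<alpha> (radius \<nu> n) rt / logratio \<alpha> (radius \<nu> n) r\<^sub>0 = eps \<alpha> \<kappa> s \<longrightarrow>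
    exp (rt - r\<^sub>0) \<le> C * eps \<alpha> \<kappa> s powr (- 1 / \<alpha>)"
proof (intro exI[of _ 1] conjI allI impI)
  have a0: "\<alpha> > 0" using assms by simp
  fix \<nu> :: real and n :: nat and s \<kappa> \<theta>\<^sub>0 r0 rt :: real
  define R where "R = radius \<nu> n"
  assume s: "s > 0" and k: "\<kappa> \<ge> 1"
    and r0: "r0 \<in> {0 .. radius \<nu> n}" and rt: "rt \<in> {r0 .. radius \<nu> n}"
    and rat: "logratio \<alpha> (radius \<nu> n) rt / logratio \<alpha> (radius \<nu> n) r0 = eps \<alpha> \<kappa> s"
  have r0': "0 \<le> r0" "r0 \<le> R" and rt': "r0 \<le> rt" "rt \<le> R" using r0 rt unfolding R_def by auto
  have epos: "eps \<alpha> \<kappa> s > 0"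
  proof -
    have "1 + \<kappa> * s powr (1 / (2 * \<alpha>)) > 0" using k s by (simp add: add_pos_nonneg)
    thus ?thesis unfolding eps_def using s by simp
  qed
  have ratR: "logratio \<alpha> R rt / logratio \<alpha> R r0 = eps \<alpha> \<kappa> s" using rat unfolding R_def .
  hence L0: "logratio \<alpha> R r0 \<noteq> 0" and Lt: "logratio \<alpha> R rt \<noteq> 0" using epos by auto
  have "r0 \<noteq> 0" using L0 unfolding logratio_def by auto
  hence r0p: "r0 > 0" using r0' by simp
  have "rt \<noteq> R"
  proof
    assume "rt = R"
    moreover have "tanh (\<alpha>*R/2) \<noteq> 0" using a0 r0p rt' by simp
    ultimately show False using Lt unfolding logratio_def by simp
  qed
  hence rtR: "rt < R" using rt' by simp
  define A where "A = (\<lambda>t::real. ln (1+t) - ln (1-t))"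
  define x0 where "x0 = exp (-(\<alpha>*r0))"
  define xt where "xt = exp (-(\<alpha>*rt))"
  define y where "y = exp (-(\<alpha>*R))"
  have E0: "logratio \<alpha> R r0 = A x0 - A y" unfolding A_def x0_def y_def
    using logratio_eq[OF a0 r0p r0'(2)] .
  have Et: "logratio \<alpha> R rt = A xt - A y" unfolding A_def xt_def y_def
    using logratio_eq[OF a0, of rt R] r0p rt' by simp
  have L0pos: "logratio \<alpha> R r0 > 0" using logratio_nonneg[OF a0 r0p r0'(2)] L0 by simp
  have xs: "0 \<le> y" "y \<le> xt" "xt \<le> x0" "x0 < 1" "0 < xt"
    unfolding x0_def xt_def y_def using a0 r0p rt' by (auto simp: mult_left_mono mult_pos_pos)
  have G: "(A xt - A y) / xt \<le> (A x0 - A y) / x0"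
    using Gmono[OF xs(1,2,3,4,5)] unfolding A_def .
  have x0p: "x0 > 0" using xs by simp
  have "eps \<alpha> \<kappa> s = (A xt - A y) / (A x0 - A y)" using ratR E0 Et by simp
  also have "\<dots> \<le> xt / x0"
  proof -
    have p: "A x0 - A y > 0" using L0pos E0 by simp
    have "(A xt - A y) * x0 \<le> (A x0 - A y) * xt" using G xs x0p by (simp add: divide_simps)
    thus ?thesis using p x0p by (simp add: divide_simps mult.commute)
  qed
  also have "xt / x0 = exp (- (\<alpha> * (rt - r0)))" unfolding xt_def x0_def
    by (simp add: exp_diff[symmetric] algebra_simps)
  finally have le: "eps \<alpha> \<kappa> s \<le> exp (- (\<alpha> * (rt - r0)))" .
  have "exp (rt - r0) = exp (- (\<alpha> * (rt - r0))) powr (-1/\<alpha>)"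
    using a0 by (simp add: exp_powr_real)
  also have "\<dots> \<le> eps \<alpha> \<kappa> s powr (-1/\<alpha>)"
    using powr_mono2'[of "-1/\<alpha>" "eps \<alpha> \<kappa> s" "exp (- (\<alpha> * (rt - r0)))"] le epos a0 by simp
  finally show "exp (rt - r0) \<le> 1 * eps \<alpha> \<kappa> s powr (- 1 / \<alpha>)" by simp
qed simp

end
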